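(* Let $n,t\in\mathbb{N}$ with $n > t \geq 2$. Then (a) $d_{\max}(n, n-t)=3$ if and only if $2^{t-1} < n < 2^{t}$; (b) $d_{\max}(n, n-t)=4$ if and only if $s_{\max}(t) \leq n \leq 2^{t-1}$; (c) $d_{\max}(n, n-t)=5$ if and only if $s_{\max}(t-1) < n < s_{\max}(t)$; (d) $d_{\max}(n, n-t)\geq 6$ if and only if $n \leq s_{\max}(t-1)$.
   Context: $\mathbb{F}_2^t$ denotes the $t$-dimensional vector space over $\mathbb{F}_2$. A subset $M\subseteq \mathbb{F}_2^t$ is called Sidon if $m_1+m_2\neq m_3+m_4$ for all pairwise distinct $m_1,m_2,m_3,m_4\in M$. $s_{\max}(t)$ denotes the maximum size of a Sidon set in $\mathbb{F}_2^t$. A binary linear code of length $n$ and dimension $k$ is a $k$-dimensional subspace of $\mathbb{F}_2^n$; its minimum distance is the minimum Hamming weight of its nonzero codewords. $d_{\max}(n,k)$ is the maximum $d$ such that there exists a binary linear code of length $n$, dimension $k$ and minimum distance $d$. *)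

theory Defs
  imports Main "HOL-Library.Z2" "HOL-Library.Function_Algebras"
begin

text \<open>Vectors of F_2^n: functions nat => bit (bit = the field F_2) vanishing outside {0..<n}.
  Addition is pointwise (Function_Algebras).\<close>

type_synonym vec = "nat \<Rightarrow> bit"

definition F2vec :: "nat \<Rightarrow> vec set" where
  "F2vec n = {v. \<forall>i\<ge>n. v i = 0}"

definition lincomb :: "vec set \<Rightarrow> (vec \<Rightarrow> bit) \<Rightarrow> vec" where
  "lincomb B c = (\<Sum>b\<in>B. (\<lambda>i. c b * b i))"

definition lin_span :: "vec set \<Rightarrow> vec set" where
  "lin_span B = {lincomb B c | c. True}"

definition lin_indep :: "vec set \<Rightarrow> bool" where
  "lin_indep B = (\<forall>c. lincomb B c = 0 \<longrightarrow> (\<forall>b\<in>B. c b = 0))"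

definition is_linear_code :: "nat \<Rightarrow> nat \<Rightarrow> vec set \<Rightarrow> bool" where
  "is_linear_code n k C =
     (C \<subseteq> F2vec n \<and> (\<exists>B. finite B \<and> B \<subseteq> F2vec n \<and> card B = k \<and> lin_indep B \<and> lin_span B = C))"

definition hamming_weight :: "vec \<Rightarrow> nat" where
  "hamming_weight v = card {i. v i \<noteq> 0}"

definition min_dist :: "vec set \<Rightarrow> nat" where
  "min_dist C = Min (hamming_weight ` (C - {0}))"

definition d_max :: "nat \<Rightarrow> nat \<Rightarrow> nat" where
  "d_max n k = Max {min_dist C | C. is_linear_code n k C}"

definition sidon :: "vec set \<Rightarrow> bool" where
  "sidon M = (\<forall>m1\<in>M. \<forall>m2\<in>M. \<forall>m3\<in>M. \<forall>m4\<in>M.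
      distinct [m1, m2, m3, m4] \<longrightarrow> m1 + m2 \<noteq> m3 + m4)"

definition s_max :: "nat \<Rightarrow> nat" where
  "s_max t = Max {card M | M. M \<subseteq> F2vec t \<and> sidon M}"

end

theory Submission
  imports Defs "HOL.Vector_Spaces"
begin

definition sc :: "bit \<Rightarrow> vec \<Rightarrow> vec" where "sc c v = (\<lambda>i. c * v i)"

lemma sc_apply[simp]: "sc c v i = c * v i" by (simp add: sc_def)

interpretation V: vector_space sc
  by unfold_locales (auto simp: sc_def fun_eq_iff algebra_simps)

interpretation VP: vector_space_pair sc sc ..

lemma sum_vec_apply: "(\<Sum>i\<in>A. (f i :: vec)) k = (\<Sum>i\<in>A. f i k)"
  by (induction A rule: infinite_finite_induct) auto

lemma bit_add_self[simp]: "(x::bit) + x = 0"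
  by simp
declare add_bit_eq_xor[simp del] mult_bit_eq_and[simp del]

lemma vec_add_self[simp]: "(x::vec) + x = 0"
  by (simp add: fun_eq_iff)
lemma vec_minus_eq_plus: "(x::vec) - y = x + y"
proof -
  have "x - y = x - y + (y + y)" by simp
  also have "\<dots> = x + y" by (simp add: algebra_simps)
  finally show ?thesis .
qed
lemma vec_eq_iff_add0: "((x::vec) = y) \<longleftrightarrow> x + y = 0"
  by (metis vec_minus_eq_plus right_minus_eq)

definition ev :: "nat \<Rightarrow> vec" where "ev j = (\<lambda>i. if i = j then 1 else 0)"
definition chi :: "nat set \<Rightarrow> vec" where "chi S = (\<lambda>i. if i \<in> S then 1 else 0)"
definition supp :: "vec \<Rightarrow> nat set" where "supp v = {i. v i \<noteq> 0}"

lemma F2vec_subspace: "V.subspace (F2vec n)"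
  unfolding V.subspace_def F2vec_def by auto

lemma ev_in: "j < n \<Longrightarrow> ev j \<in> F2vec n" by (auto simp: ev_def F2vec_def)

lemma vec_expand: "x \<in> F2vec n \<Longrightarrow> x = (\<Sum>i<n. sc (x i) (ev i))"
proof (rule ext)
  fix k assume x: "x \<in> F2vec n"
  have "(\<Sum>i<n. sc (x i) (ev i)) k = (\<Sum>i<n. x i * ev i k)"
    by (simp add: sum_vec_apply)
  also have "\<dots> = (\<Sum>i<n. if i = k then x k else 0)"
    by (rule sum.cong) (auto simp: ev_def)
  also have "\<dots> = (if k < n then x k else 0)" by (simp add: sum.delta')
  also have "\<dots> = x k" using x by (auto simp: F2vec_def)
  finally show "x k = (\<Sum>i<n. sc (x i) (ev i)) k" by simp
qed

lemma F2vec_span: "F2vec n = V.span (ev ` {..<n})"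
proof
  show "F2vec n \<subseteq> V.span (ev ` {..<n})"
  proof
    fix x assume x: "x \<in> F2vec n"
    have "(\<Sum>i<n. sc (x i) (ev i)) \<in> V.span (ev ` {..<n})"
      by (intro V.span_sum V.span_scale V.span_base) auto
    with vec_expand[OF x] show "x \<in> V.span (ev ` {..<n})" by simp
  qed
  show "V.span (ev ` {..<n}) \<subseteq> F2vec n"
    by (rule V.span_minimal) (auto intro: ev_in F2vec_subspace)
qed

lemma inj_ev: "inj ev"
  by (auto simp: inj_def ev_def fun_eq_iff split: if_splits)

lemma ev_indep: "V.independent (ev ` A)"
proof -
  have "V.independent (ev ` A)"
    unfolding V.independent_explicit_finite_subsets
  proof (intro allI impI ballI)
    fix S u v assume S: "S \<subseteq> ev ` A" "finite S" and u: "(\<Sum>v\<in>S. sc (u v) v) = 0" and v: "v \<in> S"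
    then obtain j where j: "v = ev j" by auto
    have "(\<Sum>w\<in>S. sc (u w) w) j = u v"
    proof -
      have "(\<Sum>w\<in>S. sc (u w) w) j = (\<Sum>w\<in>S. u w * w j)" by (simp add: sum_vec_apply)
      also have "\<dots> = (\<Sum>w\<in>{v}. u w * w j)"
      proof (rule sum.mono_neutral_right)
        show "\<forall>w\<in>S - {v}. u w * w j = 0"
        proof
          fix w assume w: "w \<in> S - {v}"
          then obtain i where "w = ev i" using S by auto
          with w j have "i \<noteq> j" by auto
          then show "u w * w j = 0" using \<open>w = ev i\<close> by (simp add: ev_def)
        qed
      qed (use S v in auto)
      finally show ?thesis using j by (simp add: ev_def)
    qed
    with u show "u v = 0" by simp
  qed
  then show ?thesis .
qed

lemma card_ev: "card (ev ` {..<n}) = n"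
  using inj_ev by (simp add: card_image inj_on_subset)

lemma finite_F2vec: "finite (F2vec n)"
proof -
  have "F2vec n \<subseteq> chi ` Pow {..<n}"
  proof
    fix x assume x: "x \<in> F2vec n"
    have "x = chi (supp x)" by (auto simp: fun_eq_iff chi_def supp_def)
    moreover have "supp x \<subseteq> {..<n}" using x by (auto simp: supp_def F2vec_def not_less[symmetric])
    ultimately show "x \<in> chi ` Pow {..<n}" by blast
  qed
  then show ?thesis by (rule finite_subset) auto
qed

lemma chi_inj: "inj chi"
proof (rule injI)
  fix S T assume "chi S = chi T"
  then have "\<forall>i. (i \<in> S) = (i \<in> T)" unfolding chi_def fun_eq_iff by (metis one_neq_zero)
  then show "S = T" by blast
qed

lemma card_F2vec: "card (F2vec n) = 2 ^ n"
proof -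
  have "F2vec n = chi ` Pow {..<n}"
  proof
    show "F2vec n \<subseteq> chi ` Pow {..<n}"
    proof
      fix x assume x: "x \<in> F2vec n"
      have "x = chi (supp x)" by (auto simp: fun_eq_iff chi_def supp_def)
      moreover have "supp x \<subseteq> {..<n}" using x by (auto simp: supp_def F2vec_def not_less[symmetric])
      ultimately show "x \<in> chi ` Pow {..<n}" by blast
    qed
    show "chi ` Pow {..<n} \<subseteq> F2vec n" by (auto simp: chi_def F2vec_def)
  qed
  then have "card (F2vec n) = card (Pow {..<n})"
    using chi_inj by (simp add: card_image inj_on_subset)
  then show ?thesis by (simp add: card_Pow)
qed


lemma lincomb_eq: "lincomb B c = (\<Sum>b\<in>B. sc (c b) b)"
  by (simp add: lincomb_def sc_def)

lemma lin_span_eq: "finite B \<Longrightarrow> lin_span B = V.span B"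
  by (simp add: lin_span_def lincomb_eq V.span_finite image_def)

lemma lin_indep_eq: "finite B \<Longrightarrow> lin_indep B \<longleftrightarrow> V.independent B"
  by (auto simp: lin_indep_def lincomb_eq V.dependent_finite)

lemma code_basis:
  assumes "is_linear_code n k C"
  shows "\<exists>B. finite B \<and> B \<subseteq> F2vec n \<and> card B = k \<and> V.independent B \<and> C = V.span B"
  using assms unfolding is_linear_code_def by (metis lin_span_eq lin_indep_eq)

lemma basis_card_F2vec:
  assumes "B' \<subseteq> F2vec n" "V.independent B'" "F2vec n \<subseteq> V.span B'"
  shows "finite B' \<and> card B' = n"
proof -
  have "finite B' \<and> card B' \<le> card (ev ` {..<n})"
    by (rule V.independent_span_bound) (use assms F2vec_span in auto)
  moreover have "card (ev ` {..<n}) \<le> card B'"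
    using V.independent_span_bound[of B' "ev ` {..<n}"] assms calculation ev_indep
    by (metis F2vec_span V.span_superset subset_trans)
  ultimately show ?thesis by (simp add: card_ev)
qed

lemma UB:
  assumes B: "V.independent B" "B \<subseteq> F2vec n" and card: "card B + t = n"
  shows "\<exists>h. (\<forall>i<n. h i \<in> F2vec t) \<and>
     (\<forall>x\<in>F2vec n. ((\<Sum>i<n. sc (x i) (h i)) = 0) = (x \<in> V.span B))"
proof -
  obtain B' where BB': "B \<subseteq> B'" "B' \<subseteq> F2vec n" "V.independent B'" "F2vec n \<subseteq> V.span B'"
    using V.maximal_independent_subset_extend[OF B(2) B(1)] by blast
  from basis_card_F2vec[OF BB'(2-4)] have finB': "finite B'" and cB': "card B' = n" by auto
  define R where "R = B' - B"
  have finR: "finite R" using finB' by (simp add: R_def)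
  have finB: "finite B" using finB' BB'(1) finite_subset by blast
  have cR: "card R = t" using card cB' BB'(1) finB by (simp add: R_def card_Diff_subset)
  obtain \<phi> where phi: "bij_betw \<phi> R {0..<t}" using ex_bij_betw_finite_nat[OF finR] cR by auto
  define f where "f b = (if b \<in> R then ev (\<phi> b) else 0)" for b
  define g where "g = VP.construct B' f"
  have lin: "Vector_Spaces.linear sc sc g" unfolding g_def by (rule VP.linear_construct[OF BB'(3)])
  have gb: "g b = f b" if "b \<in> B'" for b unfolding g_def by (rule VP.construct_basis[OF BB'(3) that])
  define h where "h i = g (ev i)" for i
  have gx: "g x = (\<Sum>i<n. sc (x i) (h i))" if "x \<in> F2vec n" for x
  proof -
    have "g x = g (\<Sum>i<n. sc (x i) (ev i))" using vec_expand[OF that] by simp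
    also have "\<dots> = (\<Sum>i<n. sc (x i) (h i))"
      by (simp add: VP.linear_sum[OF lin] VP.linear_scale[OF lin] h_def)
    finally show ?thesis .
  qed
  have fB': "f ` B' \<subseteq> F2vec t"
  proof
    fix y assume "y \<in> f ` B'"
    then obtain b where "b \<in> B'" "y = f b" by auto
    then show "y \<in> F2vec t"
      using phi by (auto simp: f_def bij_betw_def intro!: ev_in F2vec_subspace[THEN V.subspace_0])
  qed
  have hin: "h i \<in> F2vec t" for i
  proof -
    have "h i \<in> range g" by (simp add: h_def)
    also have "range g = V.span (f ` B')" unfolding g_def by (rule VP.range_construct_eq_span[OF BB'(3)])
    also have "\<dots> \<subseteq> F2vec t" by (rule V.span_minimal[OF fB' F2vec_subspace])
    finally show ?thesis .
  qed
  have ker: "(g x = 0) = (x \<in> V.span B)" if x: "x \<in> F2vec n" for x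
  proof
    assume "x \<in> V.span B"
    then show "g x = 0"
      by (rule VP.linear_eq_0_on_span[OF lin, rotated]) (use BB'(1) in \<open>auto simp: gb f_def R_def\<close>)
  next
    assume g0: "g x = 0"
    have "x \<in> V.span (B \<union> R)" using x BB' by (auto simp: R_def Un_absorb1)
    then obtain y z where yz: "x = y + z" "y \<in> V.span B" "z \<in> V.span R" unfolding V.span_Un by blast
    have "g y = 0"
      by (rule VP.linear_eq_0_on_span[OF lin, rotated, OF yz(2)]) (use BB'(1) in \<open>auto simp: gb f_def R_def\<close>)
    then have gz: "g z = 0" using g0 yz(1) VP.linear_add[OF lin] by simp
    have gR: "g ` R = ev ` {0..<t}"
    proof -
      have "g ` R = ev ` \<phi> ` R" using gb by (auto simp: R_def f_def image_iff)
      then show ?thesis using phi by (simp add: bij_betw_def)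
    qed
    have injR: "inj_on g R"
    proof (rule inj_onI)
      fix a b assume "a \<in> R" "b \<in> R" "g a = g b"
      then have "ev (\<phi> a) = ev (\<phi> b)" using gb by (simp add: R_def f_def)
      then have "\<phi> a = \<phi> b" using inj_ev by (simp add: inj_eq)
      then show "a = b" using phi \<open>a \<in> R\<close> \<open>b \<in> R\<close> by (auto simp: bij_betw_def inj_on_def)
    qed
    have "z = 0"
      by (rule VP.linear_indep_image_lemma[OF lin finR _ injR yz(3) gz]) (simp add: gR ev_indep)
    then show "x \<in> V.span B" using yz by simp
  qed
  show ?thesis
    by (rule exI[of _ h]) (use hin gx ker in auto)
qed


lemma span_disjoint:
  assumes ind: "V.independent (A \<union> B)" and dis: "A \<inter> B = {}"
    and zA: "z \<in> V.span A" and zB: "z \<in> V.span B"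
  shows "z = 0"
proof -
  have iA: "V.independent A" and iB: "V.independent B"
    using ind V.independent_mono by blast+
  have rA: "V.representation (A \<union> B) z = V.representation A z"
    by (rule V.representation_extend[OF ind zA]) auto
  have rB: "V.representation (A \<union> B) z = V.representation B z"
    by (rule V.representation_extend[OF ind zB]) auto
  have r0: "V.representation A z b = 0" for b
  proof (rule ccontr)
    assume ne: "V.representation A z b \<noteq> 0"
    then have "b \<in> A" by (rule V.representation_ne_zero)
    moreover from ne rA rB have "V.representation B z b \<noteq> 0" by simp
    then have "b \<in> B" by (rule V.representation_ne_zero)
    ultimately show False using dis by blast
  qed
  have "z = (\<Sum>b | V.representation A z b \<noteq> 0. sc (V.representation A z b) b)"
    by (rule V.sum_nonzero_representation_eq[OF iA zA, symmetric])
  also have "\<dots> = 0" using r0 by simp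
  finally show ?thesis .
qed

definition syn :: "(nat \<Rightarrow> vec) \<Rightarrow> nat \<Rightarrow> vec \<Rightarrow> vec" where
  "syn h n x = (\<Sum>i<n. sc (x i) (h i))"

lemma syn_linear: "Vector_Spaces.linear sc sc (syn h n)"
  unfolding Vector_Spaces.linear_iff
proof (intro conjI allI)
  show "vector_space sc" by (rule V.vector_space_axioms)
  show "vector_space sc" by (rule V.vector_space_axioms)
  fix x y :: vec and c :: bit
  show "syn h n (x + y) = syn h n x + syn h n y"
    by (simp add: syn_def V.scale_left_distrib sum.distrib)
  show "syn h n (sc c x) = sc c (syn h n x)"
    by (simp add: syn_def V.scale_sum_right flip: V.scale_scale)
qed

lemma syn_in: assumes "\<forall>i<n. h i \<in> F2vec t" shows "syn h n x \<in> F2vec t"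
  unfolding syn_def using assms
  by (intro V.subspace_sum[OF F2vec_subspace] V.subspace_scale[OF F2vec_subspace]) auto

lemma LB:
  assumes h: "\<forall>i<n. h i \<in> F2vec t" and tn: "t \<le> n"
  shows "\<exists>B. V.independent B \<and> B \<subseteq> F2vec n \<and> finite B \<and> card B = n - t \<and> (\<forall>x\<in>B. syn h n x = 0)"
proof -
  define g where "g = syn h n"
  have lin: "Vector_Spaces.linear sc sc g" unfolding g_def by (rule syn_linear)
  define K where "K = {x \<in> F2vec n. g x = 0}"
  have Ksub: "K \<subseteq> F2vec n" by (auto simp: K_def)
  obtain BK where BK: "BK \<subseteq> K" "V.independent BK" "K \<subseteq> V.span BK"
    by (rule V.maximal_independent_subset[of K])
  obtain B' where BB': "BK \<subseteq> B'" "B' \<subseteq> F2vec n" "V.independent B'" "F2vec n \<subseteq> V.span B'"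
    using V.maximal_independent_subset_extend[of BK "F2vec n"] BK Ksub by blast
  from basis_card_F2vec[OF BB'(2-4)] have finB': "finite B'" and cB': "card B' = n" by auto
  define R where "R = B' - BK"
  have finR: "finite R" using finB' by (simp add: R_def)
  have finBK: "finite BK" using finB' BB'(1) finite_subset by blast
  have indR: "V.independent R" using BB'(3) V.independent_mono by (auto simp: R_def)
  have inj: "inj_on g (V.span R)"
    unfolding VP.linear_inj_on_iff_eq_0[OF lin V.subspace_span]
  proof (intro ballI impI)
    fix z assume z: "z \<in> V.span R" "g z = 0"
    have "V.span R \<subseteq> F2vec n" using BB'(2) by (intro V.span_minimal F2vec_subspace) (auto simp: R_def)
    with z have "z \<in> K" by (auto simp: K_def)
    then have "z \<in> V.span BK" using BK by auto
    moreover have "V.independent (BK \<union> R)" using BB' by (simp add: R_def Un_absorb1)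
    ultimately show "z = 0" using span_disjoint[of BK R z] z by (auto simp: R_def)
  qed
  obtain \<psi> where psi: "Vector_Spaces.linear sc sc \<psi>" "\<forall>v\<in>V.span R. \<psi> (g v) = v"
    using VP.linear_exists_left_inverse_on[OF lin V.subspace_span inj] by blast
  have "R \<subseteq> V.span (\<psi> ` ev ` {..<t})"
  proof
    fix r assume r: "r \<in> R"
    have "g r \<in> F2vec t" unfolding g_def by (rule syn_in[OF h])
    then have "\<psi> (g r) \<in> \<psi> ` V.span (ev ` {..<t})" using F2vec_span by auto
    also have "\<dots> = V.span (\<psi> ` ev ` {..<t})" by (rule VP.linear_span_image[OF psi(1), symmetric])
    finally show "r \<in> V.span (\<psi> ` ev ` {..<t})" using psi(2) r V.span_base by metis
  qed
  then have "card R \<le> card (\<psi> ` ev ` {..<t})"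
    using V.independent_span_bound[OF _ indR] by auto
  also have "\<dots> \<le> t" using card_image_le[of "ev ` {..<t}" \<psi>] card_ev[of t] by simp
  finally have cR: "card R \<le> t" .
  have "card BK = n - card R" using cB' BB'(1) finBK card_mono[OF finB' BB'(1)] by (simp add: R_def card_Diff_subset)
  then have "n - t \<le> card BK" using cR by simp
  then obtain B where B: "B \<subseteq> BK" "card B = n - t"
    using obtain_subset_with_card_n by metis
  show ?thesis
  proof (intro exI conjI)
    show "V.independent B" using B BK V.independent_mono by blast
    show "B \<subseteq> F2vec n" using B BK Ksub by blast
    show "finite B" using B finBK finite_subset by blast
    show "card B = n - t" by fact
    show "\<forall>x\<in>B. syn h n x = 0" using B BK by (auto simp: K_def g_def)
  qed
qed


definition good :: "(nat \<Rightarrow> vec) \<Rightarrow> nat \<Rightarrow> nat \<Rightarrow> nat \<Rightarrow> bool" where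
  "good h n t d = ((\<forall>i<n. h i \<in> F2vec t) \<and> (\<forall>S. S \<subseteq> {..<n} \<and> S \<noteq> {} \<and> card S < d \<longrightarrow> sum h S \<noteq> 0))"

lemma supp_sub: "x \<in> F2vec n \<Longrightarrow> supp x \<subseteq> {..<n}"
  by (auto simp: supp_def F2vec_def not_less[symmetric])

lemma bit_cases': "(b::bit) = 0 \<or> b = 1"
  using bit_not_zero_iff by blast

lemma sc_bit: "sc b v = (if b = 0 then 0 else v)"
  using bit_cases'[of b] by (auto simp: sc_def fun_eq_iff)

lemma syn_supp: assumes "x \<in> F2vec n" shows "syn h n x = sum h (supp x)"
proof -
  have "syn h n x = (\<Sum>i<n. if x i \<noteq> 0 then h i else 0)"
    unfolding syn_def by (rule sum.cong) (auto simp: sc_bit)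
  also have "\<dots> = sum h {i \<in> {..<n}. x i \<noteq> 0}" by (rule sum.inter_filter[symmetric]) simp
  also have "{i \<in> {..<n}. x i \<noteq> 0} = supp x" using supp_sub[OF assms] by (auto simp: supp_def)
  finally show ?thesis .
qed

lemma chi_in: "S \<subseteq> {..<n} \<Longrightarrow> chi S \<in> F2vec n"
  by (auto simp: chi_def F2vec_def)

lemma supp_chi[simp]: "supp (chi S) = S"
  by (auto simp: supp_def chi_def)

lemma weight_supp: "hamming_weight x = card (supp x)"
  by (simp add: hamming_weight_def supp_def)

lemma zero_iff_supp: "(x = 0) = (supp x = {})"
  by (auto simp: supp_def fun_eq_iff)

lemma min_dist_le:
  assumes "finite C" "x \<in> C" "x \<noteq> 0" shows "min_dist C \<le> hamming_weight x"
  unfolding min_dist_def using assms by (intro Min_le) auto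

lemma min_dist_ge:
  assumes "finite C" "x0 \<in> C" "x0 \<noteq> 0" "\<And>x. x \<in> C \<Longrightarrow> x \<noteq> 0 \<Longrightarrow> d \<le> hamming_weight x"
  shows "d \<le> min_dist C"
  unfolding min_dist_def using assms by (subst Min_ge_iff) auto

lemma code_of_good:
  assumes g: "good h n t d" and tn: "t < n"
  shows "\<exists>C. is_linear_code n (n - t) C \<and> d \<le> min_dist C"
proof -
  have h: "\<forall>i<n. h i \<in> F2vec t" using g by (simp add: good_def)
  obtain B where B: "V.independent B" "B \<subseteq> F2vec n" "finite B" "card B = n - t" "\<forall>x\<in>B. syn h n x = 0"
    using LB[OF h] tn by auto
  define C where "C = V.span B"
  have CF: "C \<subseteq> F2vec n" unfolding C_def by (rule V.span_minimal[OF B(2) F2vec_subspace])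
  have code: "is_linear_code n (n - t) C"
    unfolding is_linear_code_def using B CF by (auto simp: lin_indep_eq lin_span_eq C_def)
  have finC: "finite C" using CF finite_F2vec finite_subset by blast
  obtain b where b: "b \<in> B" using B(4) tn by fastforce
  have b0: "b \<noteq> 0" using b B(1) V.dependent_zero by blast
  have bC: "b \<in> C" using b by (simp add: C_def V.span_base)
  have "d \<le> min_dist C"
  proof (rule min_dist_ge[OF finC bC b0])
    fix x assume x: "x \<in> C" "x \<noteq> 0"
    have "syn h n x = 0"
      using VP.linear_eq_0_on_span[OF syn_linear[of h n], of B x] B(5) x(1) by (auto simp: C_def)
    then have "sum h (supp x) = 0" using syn_supp x CF by auto
    moreover have "supp x \<subseteq> {..<n}" using supp_sub x CF by auto
    moreover have "supp x \<noteq> {}" using x zero_iff_supp by auto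
    ultimately have "\<not> card (supp x) < d" using g unfolding good_def by blast
    then show "d \<le> hamming_weight x" by (simp add: weight_supp)
  qed
  with code show ?thesis by blast
qed

lemma good_of_code:
  assumes code: "is_linear_code n (n - t) C" and d: "d \<le> min_dist C" and tn: "t < n"
  shows "\<exists>h. good h n t d"
proof -
  obtain B where B: "finite B" "B \<subseteq> F2vec n" "card B = n - t" "V.independent B" "C = V.span B"
    using code_basis[OF code] by blast
  obtain h where h: "\<forall>i<n. h i \<in> F2vec t" "\<forall>x\<in>F2vec n. (syn h n x = 0) = (x \<in> V.span B)"
    using UB[OF B(4) B(2), of t] B(3) tn unfolding syn_def by auto
  have finC: "finite C" using code finite_F2vec finite_subset unfolding is_linear_code_def by blast
  have "\<forall>S. S \<subseteq> {..<n} \<and> S \<noteq> {} \<and> card S < d \<longrightarrow> sum h S \<noteq> 0"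
  proof (intro allI impI)
    fix S assume S: "S \<subseteq> {..<n} \<and> S \<noteq> {} \<and> card S < d"
    show "sum h S \<noteq> 0"
    proof
      assume s0: "sum h S = 0"
      have cin: "chi S \<in> F2vec n" using S chi_in by blast
      then have "syn h n (chi S) = 0" using syn_supp s0 by simp
      then have "chi S \<in> C" using h(2) cin B(5) by blast
      moreover have "chi S \<noteq> 0" using S zero_iff_supp by auto
      ultimately have "min_dist C \<le> card S" using min_dist_le[OF finC] weight_supp by fastforce
      then show False using S d by linarith
    qed
  qed
  then have "good h n t d" using h(1) by (simp add: good_def)
  then show ?thesis by blast
qed

lemma finite_codes_md: "finite {min_dist C | C. is_linear_code n k C}"
proof -
  have "{min_dist C | C. is_linear_code n k C} \<subseteq> min_dist ` Pow (F2vec n)"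
    by (auto simp: is_linear_code_def)
  then show ?thesis using finite_F2vec by (meson finite_Pow_iff finite_imageI finite_subset)
qed

lemma good0: "good (\<lambda>_. 0) n t 0"
  by (simp add: good_def F2vec_def)

lemma dmax_ge:
  assumes tn: "t < n"
  shows "d \<le> d_max n (n - t) \<longleftrightarrow> (\<exists>C. is_linear_code n (n - t) C \<and> d \<le> min_dist C)"
proof -
  let ?S = "{min_dist C | C. is_linear_code n (n - t) C}"
  have fin: "finite ?S" by (rule finite_codes_md)
  have ne: "?S \<noteq> {}" using code_of_good[OF good0 tn] by blast
  show ?thesis
  proof
    assume "d \<le> d_max n (n - t)"
    moreover have "d_max n (n - t) \<in> ?S" unfolding d_max_def using Max_in[OF fin ne] .
    ultimately show "\<exists>C. is_linear_code n (n - t) C \<and> d \<le> min_dist C" by auto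
  next
    assume "\<exists>C. is_linear_code n (n - t) C \<and> d \<le> min_dist C"
    then obtain C where "is_linear_code n (n - t) C" "d \<le> min_dist C" by blast
    moreover have "min_dist C \<le> d_max n (n - t)"
      unfolding d_max_def using calculation by (intro Max_ge[OF fin]) auto
    ultimately show "d \<le> d_max n (n - t)" by linarith
  qed
qed

lemma dmax_good:
  assumes tn: "t < n"
  shows "d \<le> d_max n (n - t) \<longleftrightarrow> (\<exists>h. good h n t d)"
  using dmax_ge[OF tn] code_of_good[OF _ tn] good_of_code[OF _ _ tn] by meson

lemma finite_sidon_cards: "finite {card M | M. M \<subseteq> F2vec t \<and> sidon M}"
proof -
  have "{card M | M. M \<subseteq> F2vec t \<and> sidon M} \<subseteq> card ` Pow (F2vec t)" by auto
  then show ?thesis using finite_F2vec by (meson finite_Pow_iff finite_imageI finite_subset)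
qed

lemma sidon_empty: "sidon {}" by (simp add: sidon_def)

lemma s_max_ge: "M \<subseteq> F2vec t \<Longrightarrow> sidon M \<Longrightarrow> card M \<le> s_max t"
  unfolding s_max_def by (intro Max_ge[OF finite_sidon_cards]) auto

lemma s_max_attained: "\<exists>M. M \<subseteq> F2vec t \<and> sidon M \<and> card M = s_max t"
proof -
  have "s_max t \<in> {card M | M. M \<subseteq> F2vec t \<and> sidon M}"
    unfolding s_max_def by (rule Max_in[OF finite_sidon_cards]) (use sidon_empty in blast)
  then show ?thesis by auto
qed

lemma sidon4:
  assumes "sidon M" "p \<in> M" "q \<in> M" "r \<in> M" "s \<in> M" "distinct [p, q, r, s]"
  shows "p + q + r + s \<noteq> 0"
proof -
  have "p + q \<noteq> r + s" using assms unfolding sidon_def by blast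
  then show ?thesis using vec_eq_iff_add0[of "p + q" "r + s"] by (simp add: add.assoc)
qed

lemma sidon_lemma:
  assumes h: "\<forall>i<m. h i \<in> F2vec t"
    and nz: "\<forall>T. T \<subseteq> {..<m} \<and> T \<noteq> {} \<and> card T \<le> 4 \<longrightarrow> sum h T \<noteq> 0"
  shows "m + 1 \<le> s_max t"
proof -
  have inj: "inj_on h {..<m}"
  proof (rule inj_onI)
    fix i j assume ij: "i \<in> {..<m}" "j \<in> {..<m}" "h i = h j"
    show "i = j"
    proof (rule ccontr)
      assume "i \<noteq> j"
      then have "sum h {i, j} = h i + h j" by simp
      also have "\<dots> = 0" using ij by simp
      finally show False using nz[rule_format, of "{i, j}"] ij \<open>i \<noteq> j\<close> by auto
    qed
  qed
  have n0: "0 \<notin> h ` {..<m}"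
  proof
    assume "0 \<in> h ` {..<m}"
    then obtain i where "i < m" "h i = 0" by auto
    then show False using nz[rule_format, of "{i}"] by auto
  qed
  define M where "M = insert 0 (h ` {..<m})"
  have cM: "card M = m + 1" using n0 inj by (simp add: M_def card_image card_insert_disjoint)
  have MF: "M \<subseteq> F2vec t" using h by (auto simp: M_def F2vec_def)
  have "sidon M"
    unfolding sidon_def
  proof (intro ballI impI)
    fix m1 m2 m3 m4 assume mem: "m1 \<in> M" "m2 \<in> M" "m3 \<in> M" "m4 \<in> M" and dist: "distinct [m1, m2, m3, m4]"
    show "m1 + m2 \<noteq> m3 + m4"
    proof
      assume eq: "m1 + m2 = m3 + m4"
      define W where "W = {m1, m2, m3, m4}"
      have sW: "sum id W = 0"
      proof -
        have "sum id W = m1 + m2 + (m3 + m4)" using dist by (simp add: W_def add.assoc)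
        then show ?thesis using eq vec_eq_iff_add0[of "m1 + m2" "m3 + m4"] by simp
      qed
      have cW: "card W = 4" using dist by (simp add: W_def)
      define T where "T = {i \<in> {..<m}. h i \<in> W}"
      have hT: "h ` T = W - {0}" using mem n0 by (auto simp: T_def W_def M_def)
      have injT: "inj_on h T" using inj by (rule inj_on_subset) (auto simp: T_def)
      have "sum h T = sum id (h ` T)" by (simp add: sum.reindex[OF injT])
      also have "\<dots> = sum id W"
        unfolding hT by (rule sum.mono_neutral_left) (auto simp: W_def)
      finally have s0: "sum h T = 0" using sW by simp
      have "card T = card (W - {0})" using card_image[OF injT] hT by simp
      moreover have "card (W - {0}) \<ge> 3" "card (W - {0}) \<le> 4"
        using cW by (auto simp: card_Diff_singleton_if W_def)
      ultimately have "T \<noteq> {}" "card T \<le> 4" by auto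
      moreover have "T \<subseteq> {..<m}" by (auto simp: T_def)
      ultimately show False using nz[rule_format, of T] s0 by blast
    qed
  qed
  then show ?thesis using s_max_ge[OF MF] cM by simp
qed

lemma chi_single: "ev j = chi {j}" by (simp add: ev_def chi_def fun_eq_iff)

lemma chi_add_disj: "n \<notin> T \<Longrightarrow> chi T + chi {n} = chi (insert n T)"
  by (auto simp: chi_def fun_eq_iff)

lemma code6_smax:
  assumes code: "is_linear_code n (n - t) C" and d: "6 \<le> min_dist C" and tn: "t < n" and t1: "1 \<le> t"
  shows "n \<le> s_max (t - 1)"
proof -
  obtain B where B: "finite B" "B \<subseteq> F2vec n" "card B = n - t" "V.independent B" "C = V.span B"
    using code_basis[OF code] by blast
  have finC: "finite C" using code finite_F2vec finite_subset unfolding is_linear_code_def by blast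
  have CF: "C \<subseteq> F2vec n" using code unfolding is_linear_code_def by blast
  define e where "e = chi {n - 1}"
  have eF: "e \<in> F2vec n" unfolding e_def using tn by (intro chi_in) auto
  have e0: "e \<noteq> 0" unfolding e_def zero_iff_supp by simp
  have eC: "e \<notin> C"
  proof
    assume "e \<in> C"
    then have "min_dist C \<le> hamming_weight e" using min_dist_le[OF finC _ e0] by blast
    also have "\<dots> = 1" by (simp add: e_def weight_supp)
    finally show False using d by simp
  qed
  have eB: "e \<notin> B" using eC B(5) V.span_base by blast
  have ind2: "V.independent (insert e B)" using eC B(4,5) V.independent_insertI by blast
  have c2: "card (insert e B) + (t - 1) = n" using B(1,3) eB tn t1 by simp
  obtain h where h: "\<forall>i<n. h i \<in> F2vec (t - 1)" "\<forall>x\<in>F2vec n. (syn h n x = 0) = (x \<in> V.span (insert e B))"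
    using UB[OF ind2 _ c2] B(2) eF unfolding syn_def by auto
  have Q: "\<forall>T. T \<subseteq> {..<n - 1} \<and> T \<noteq> {} \<and> card T \<le> 4 \<longrightarrow> sum h T \<noteq> 0"
  proof (intro allI impI)
    fix T assume T: "T \<subseteq> {..<n - 1} \<and> T \<noteq> {} \<and> card T \<le> 4"
    have finT: "finite T" using T finite_subset by blast
    show "sum h T \<noteq> 0"
    proof
      assume s0: "sum h T = 0"
      have cin: "chi T \<in> F2vec n" using T by (intro chi_in) auto
      then have "syn h n (chi T) = 0" using syn_supp s0 by simp
      then have "chi T \<in> V.span (insert e B)" using h(2) cin by blast
      then obtain k where k: "chi T - sc k e \<in> C" unfolding V.span_insert B(5) by blast
      show False
      proof (cases "k = 0")
        case True
        then have "chi T \<in> C" using k by (simp add: sc_bit)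
        moreover have "chi T \<noteq> 0" using T zero_iff_supp by auto
        ultimately have "min_dist C \<le> card T" using min_dist_le[OF finC] weight_supp by fastforce
        then show False using T d by linarith
      next
        case False
        then have k1: "sc k e = e" by (simp add: sc_bit)
        have nT: "n - 1 \<notin> T" using T by auto
        have "chi T - sc k e = chi (insert (n - 1) T)"
          using k1 chi_add_disj[OF nT] by (simp add: vec_minus_eq_plus e_def)
        with k have inC: "chi (insert (n - 1) T) \<in> C" by simp
        have "chi (insert (n - 1) T) \<noteq> 0" using zero_iff_supp by auto
        then have "min_dist C \<le> card (insert (n - 1) T)"
          using min_dist_le[OF finC inC] weight_supp by simp
        also have "\<dots> = card T + 1" using finT nT by simp
        finally show False using T d by linarith
      qed
    qed
  qed
  have "n - 1 + 1 \<le> s_max (t - 1)" by (rule sidon_lemma) (use h Q in auto)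
  then show ?thesis using tn by simp
qed

lemma good_inj:
  assumes "good h n t d" "3 \<le> d"
  shows "inj_on h {..<n}" "0 \<notin> h ` {..<n}"
proof -
  have nz: "\<And>S. S \<subseteq> {..<n} \<Longrightarrow> S \<noteq> {} \<Longrightarrow> card S < d \<Longrightarrow> sum h S \<noteq> 0"
    using assms(1) unfolding good_def by blast
  show "inj_on h {..<n}"
  proof (rule inj_onI)
    fix i j assume ij: "i \<in> {..<n}" "j \<in> {..<n}" "h i = h j"
    show "i = j"
    proof (rule ccontr)
      assume "i \<noteq> j"
      then have "sum h {i, j} = h i + h j" by simp
      also have "\<dots> = 0" using ij by simp
      finally show False using nz[of "{i, j}"] ij \<open>i \<noteq> j\<close> assms(2) by auto
    qed
  qed
  show "0 \<notin> h ` {..<n}"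
  proof
    assume "0 \<in> h ` {..<n}"
    then obtain i where "i < n" "h i = 0" by auto
    then show False using nz[of "{i}"] assms(2) by auto
  qed
qed

lemma good3_bound:
  assumes "good h n t 3" shows "n < 2 ^ t"
proof -
  have hF: "\<forall>i<n. h i \<in> F2vec t" using assms by (simp add: good_def)
  have inj: "inj_on h {..<n}" and n0: "0 \<notin> h ` {..<n}" using good_inj[OF assms] by auto
  have "h ` {..<n} \<subseteq> F2vec t - {0}" using hF n0 by auto
  then have "card (h ` {..<n}) \<le> card (F2vec t - {0})"
    by (intro card_mono) (auto simp: finite_F2vec)
  also have "\<dots> = 2 ^ t - 1"
  proof -
    have z: "0 \<in> F2vec t" by (simp add: F2vec_def)
    show ?thesis using card_Diff_singleton[OF z] card_F2vec[of t] finite_F2vec[of t] by simp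
  qed
  finally have "n \<le> 2 ^ t - 1" using card_image[OF inj] by simp
  moreover have "(0::nat) < 2 ^ t" by simp
  ultimately show ?thesis by linarith
qed

lemma good4_bound:
  assumes g: "good h n t 4" and n: "0 < n" and t: "1 \<le> t"
  shows "n \<le> 2 ^ (t - 1)"
proof -
  have hF: "\<forall>i<n. h i \<in> F2vec t" using assms by (simp add: good_def)
  have nz: "\<And>S. S \<subseteq> {..<n} \<Longrightarrow> S \<noteq> {} \<Longrightarrow> card S < 4 \<Longrightarrow> sum h S \<noteq> 0"
    using g unfolding good_def by blast
  have inj: "inj_on h {..<n}" and n0: "0 \<notin> h ` {..<n}" using good_inj[OF g] by auto
  define A where "A = h ` {..<n}"
  define x where "x = h 0"
  define A' where "A' = (\<lambda>v. v + x) ` A"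
  have x0: "x \<noteq> 0" using n0 n by (auto simp: x_def)
  have disj: "A \<inter> A' = {}"
  proof (rule ccontr)
    assume "A \<inter> A' \<noteq> {}"
    then obtain a b where ab: "a < n" "b < n" "h a = h b + h 0" by (auto simp: A_def A'_def x_def)
    then have "h a + (h b + h 0) = 0" using vec_eq_iff_add0[of "h a" "h b + h 0"] by blast
    then have s: "h a + h b + h 0 = 0" by (metis add.assoc)
    show False
    proof (cases "a = b")
      case True then show False using ab x0 by (metis add_cancel_right_right x_def)
    next
      case ab': False
      show False
      proof (cases "b = 0")
        case True then show False using ab n0 by auto
      next
        case b0: False
        show False
        proof (cases "a = 0")
          case True then have "h b = 0" using ab by (metis add_cancel_right_left)
          then show False using ab n0 by auto
        next
          case a0: False
          have "sum h {a, b, 0} = h a + h b + h 0" using ab' a0 b0 by (simp add: add.assoc)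
          then show False using nz[of "{a, b, 0}"] s ab n ab' a0 b0 by auto
        qed
      qed
    qed
  qed
  have AF: "A \<subseteq> F2vec t" using hF by (auto simp: A_def)
  have xF: "x \<in> F2vec t" using hF n by (auto simp: x_def)
  have A'F: "A' \<subseteq> F2vec t" using AF xF
    by (auto simp: A'_def intro: V.subspace_add[OF F2vec_subspace])
  have cA: "card A = n" using card_image[OF inj] by (simp add: A_def)
  have cA': "card A' = n"
    unfolding A'_def using cA by (subst card_image) (auto simp: inj_on_def)
  have "card (A \<union> A') \<le> card (F2vec t)" using AF A'F by (intro card_mono finite_F2vec) auto
  moreover have "card (A \<union> A') = 2 * n"
    using disj cA cA' by (subst card_Un_disjoint) (auto simp: A_def A'_def)
  ultimately have "2 * n \<le> 2 ^ t" by (simp add: card_F2vec)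
  moreover have "(2::nat) ^ t = 2 * 2 ^ (t - 1)" using t by (metis Suc_diff_le diff_Suc_1 power_Suc)
  ultimately show ?thesis by simp
qed

lemma good5_bound:
  assumes "good h n t 5" shows "n < s_max t"
proof -
  have "n + 1 \<le> s_max t"
    by (rule sidon_lemma) (use assms in \<open>auto simp: good_def\<close>)
  then show ?thesis by simp
qed

lemma card_SucE:
  assumes "card S = Suc k"
  obtains b B where "S = insert b B" "b \<notin> B" "card B = k" "k = 0 \<Longrightarrow> B = {}"
proof -
  from card_eq_SucD[OF assms] obtain b B where H: "S = insert b B" "b \<notin> B" "card B = k" "k = 0 \<longrightarrow> B = {}"
    by (elim exE conjE) (rule that, assumption+)
  show thesis using that[OF H(1-3)] H(4) by simp
qed

lemma small_card_cases [consumes 3, case_names c1 c2 c3 c4 c5]: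
  assumes "finite S" "S \<noteq> {}" "card S \<le> 5"
  obtains (c1) a where "S = {a}"
    | (c2) a b where "S = {a, b}" "distinct [a, b]"
    | (c3) a b c where "S = {a, b, c}" "distinct [a, b, c]"
    | (c4) a b c d where "S = {a, b, c, d}" "distinct [a, b, c, d]"
    | (c5) a b c d e where "S = {a, b, c, d, e}" "distinct [a, b, c, d, e]"
proof -
  have "card S = Suc 0 \<or> card S = Suc (Suc 0) \<or> card S = Suc (Suc (Suc 0)) \<or>
     card S = Suc (Suc (Suc (Suc 0))) \<or> card S = Suc (Suc (Suc (Suc (Suc 0))))"
  proof -
    have "1 \<le> card S" using assms by (simp add: Suc_le_eq card_gt_0_iff)
    then show ?thesis using assms(3) by arith
  qed
  then show thesis
  proof (elim disjE)
    assume "card S = Suc 0"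
    then have "card S = 1" by simp
    then obtain a where "S = {a}" by (rule card_1_singletonE)
    then show thesis by (rule that(1))
  next
    assume "card S = Suc (Suc 0)"
    then obtain a B1 where 1: "S = insert a B1" "a \<notin> B1" "card B1 = Suc 0" by (rule card_SucE)
    obtain b where 2: "B1 = {b}" using card_1_singletonE[OF 1(3)[folded One_nat_def]] by blast
    show thesis by (rule that(2)[of a b]) (use 1 2 in auto)
  next
    assume "card S = Suc (Suc (Suc 0))"
    then obtain a B1 where 1: "S = insert a B1" "a \<notin> B1" "card B1 = Suc (Suc 0)" by (rule card_SucE)
    obtain b B2 where 2: "B1 = insert b B2" "b \<notin> B2" "card B2 = Suc 0" using 1(3) by (rule card_SucE)
    obtain c where 3: "B2 = {c}" using card_1_singletonE[OF 2(3)[folded One_nat_def]] by blast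
    show thesis by (rule that(3)[of a b c]) (use 1 2 3 in auto)
  next
    assume "card S = Suc (Suc (Suc (Suc 0)))"
    then obtain a B1 where 1: "S = insert a B1" "a \<notin> B1" "card B1 = Suc (Suc (Suc 0))" by (rule card_SucE)
    obtain b B2 where 2: "B1 = insert b B2" "b \<notin> B2" "card B2 = Suc (Suc 0)" using 1(3) by (rule card_SucE)
    obtain c B3 where 3: "B2 = insert c B3" "c \<notin> B3" "card B3 = Suc 0" using 2(3) by (rule card_SucE)
    obtain d where 4: "B3 = {d}" using card_1_singletonE[OF 3(3)[folded One_nat_def]] by blast
    show thesis by (rule that(4)[of a b c d]) (use 1 2 3 4 in auto)
  next
    assume "card S = Suc (Suc (Suc (Suc (Suc 0))))"
    then obtain a B1 where 1: "S = insert a B1" "a \<notin> B1" "card B1 = Suc (Suc (Suc (Suc 0)))" by (rule card_SucE)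
    obtain b B2 where 2: "B1 = insert b B2" "b \<notin> B2" "card B2 = Suc (Suc (Suc 0))" using 1(3) by (rule card_SucE)
    obtain c B3 where 3: "B2 = insert c B3" "c \<notin> B3" "card B3 = Suc (Suc 0)" using 2(3) by (rule card_SucE)
    obtain d B4 where 4: "B3 = insert d B4" "d \<notin> B4" "card B4 = Suc 0" using 3(3) by (rule card_SucE)
    obtain e where 5: "B4 = {e}" using card_1_singletonE[OF 4(3)[folded One_nat_def]] by blast
    show thesis by (rule that(5)[of a b c d e]) (use 1 2 3 4 5 in auto)
  qed
qed

lemma of_nat_bit: "(of_nat k :: bit) = (if odd k then 1 else 0)"
  by (induction k) auto

lemma odd_coord:
  fixes h :: "nat \<Rightarrow> vec"
  assumes "finite S" "\<forall>i\<in>S. h i j = 1" "odd (card S)"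
  shows "sum h S \<noteq> 0"
proof
  assume "sum h S = 0"
  then have "sum h S j = 0" by simp
  moreover have "sum h S j = (\<Sum>i\<in>S. (1::bit))" using assms(2) by (simp add: sum_vec_apply)
  moreover have "(\<Sum>i\<in>S. (1::bit)) = 1" using assms(3) by (simp add: of_nat_bit)
  ultimately show False by simp
qed

lemma cancel2: "(a::vec) + e + (b + e) = a + b"
proof -
  have "a + e + (b + e) = (a + b) + (e + e)" by (simp only: ac_simps)
  then show ?thesis by simp
qed

lemma cancel3: "(a::vec) + e + (b + e) + (c + e) = a + b + c + e"
proof -
  have "a + e + (b + e) + (c + e) = (a + b + c + e) + (e + e)" by (simp only: ac_simps)
  then show ?thesis by simp
qed

lemma cancel4: "(a::vec) + e + (b + e) + (c + e) + (d + e) = a + b + c + d"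
proof -
  have "a + e + (b + e) + (c + e) + (d + e) = (a + b + c + d) + (e + e) + (e + e)" by (simp only: ac_simps)
  then show ?thesis by simp
qed

lemma F2vec_mono: "s \<le> t \<Longrightarrow> F2vec s \<subseteq> F2vec t"
  by (auto simp: F2vec_def)

lemma injD': "inj_on u {..<n} \<Longrightarrow> a < n \<Longrightarrow> b < n \<Longrightarrow> a \<noteq> b \<Longrightarrow> u a \<noteq> u b"
  by (auto dest: inj_onD)

lemma neq_add: "(x::vec) \<noteq> y \<Longrightarrow> x + y \<noteq> 0"
  using vec_eq_iff_add0 by blast

lemma G3:
  assumes "n < 2 ^ t" shows "\<exists>h. good h n t 3"
proof -
  have z: "0 \<in> F2vec t" by (simp add: F2vec_def)
  have "card (F2vec t - {0}) = 2 ^ t - 1"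
    using card_Diff_singleton[OF z] card_F2vec[of t] finite_F2vec[of t] by simp
  then have "card {..<n} \<le> card (F2vec t - {0})" using assms by simp
  then obtain u where u: "u ` {..<n} \<subseteq> F2vec t - {0}" "inj_on u {..<n}"
    using card_le_inj[of "{..<n}" "F2vec t - {0}"] finite_F2vec by auto
  have A: "\<forall>i<n. u i \<in> F2vec t" using u(1) by auto
  have B: "sum u S \<noteq> 0" if S: "S \<subseteq> {..<n}" "S \<noteq> {}" "card S < 3" for S
  proof -
    have fin: "finite S" using S finite_subset by blast
    have le5: "card S \<le> 5" using S(3) by simp
    show ?thesis
    using fin S(2) le5 proof (cases rule: small_card_cases)
      case (c1 a) then show ?thesis using u S by auto
    next
      case (c2 a b) then show ?thesis using u S injD'[OF u(2), of a b] neq_add by auto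
    qed (use S in auto)
  qed
  have "good u n t 3" unfolding good_def using A B by blast
  then show ?thesis by blast
qed

lemma G4:
  assumes "n \<le> 2 ^ (t - 1)" "1 \<le> t" shows "\<exists>h. good h n t 4"
proof -
  have "card {..<n} \<le> card (F2vec (t - 1))" using assms by (simp add: card_F2vec)
  then obtain u where u: "u ` {..<n} \<subseteq> F2vec (t - 1)" "inj_on u {..<n}"
    using card_le_inj[of "{..<n}" "F2vec (t - 1)"] finite_F2vec by auto
  define e where "e = ev (t - 1)"
  define h where "h i = u i + e" for i
  have eF: "e \<in> F2vec t" unfolding e_def using assms by (intro ev_in) auto
  have A: "\<forall>i<n. h i \<in> F2vec t"
    using u(1) F2vec_mono[of "t - 1" t] eF by (auto simp: h_def intro!: V.subspace_add[OF F2vec_subspace])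
  have hc: "h i (t - 1) = 1" if "i < n" for i
    using u(1) that by (auto simp: h_def e_def ev_def F2vec_def)
  have B: "sum h S \<noteq> 0" if S: "S \<subseteq> {..<n}" "S \<noteq> {}" "card S < 4" for S
  proof -
    have fin: "finite S" using S finite_subset by blast
    have hcS: "\<forall>i\<in>S. h i (t - 1) = 1" using hc S by auto
    have le5: "card S \<le> 5" using S(3) by simp
    show ?thesis
    using fin S(2) le5 proof (cases rule: small_card_cases)
      case (c1 a) then show ?thesis using odd_coord[of S h "t - 1"] fin hcS by simp
    next
      case (c2 a b)
      then have "sum h S = u a + u b" using cancel2[of "u a" e "u b"] by (simp add: h_def add.assoc)
      then show ?thesis using u S c2 injD'[OF u(2), of a b] neq_add by auto
    next
      case (c3 a b c) then show ?thesis using odd_coord[of S h "t - 1"] fin hcS by simp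
    qed (use S in auto)
  qed
  have "good h n t 4" unfolding good_def using A B by blast
  then show ?thesis by blast
qed

lemma G6:
  assumes "n \<le> s_max (t - 1)" "1 \<le> t" shows "\<exists>h. good h n t 6"
proof -
  obtain M where M: "M \<subseteq> F2vec (t - 1)" "sidon M" "card M = s_max (t - 1)"
    using s_max_attained by blast
  have finM: "finite M" using M(1) finite_F2vec finite_subset by blast
  have "card {..<n} \<le> card M" using assms M by simp
  then obtain u where u: "u ` {..<n} \<subseteq> M" "inj_on u {..<n}"
    using card_le_inj[of "{..<n}" M] finM by auto
  define e where "e = ev (t - 1)"
  define h where "h i = u i + e" for i
  have eF: "e \<in> F2vec t" unfolding e_def using assms by (intro ev_in) auto
  have A: "\<forall>i<n. h i \<in> F2vec t"
    using u(1) M(1) F2vec_mono[of "t - 1" t] eF by (auto simp: h_def intro!: V.subspace_add[OF F2vec_subspace])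
  have hc: "h i (t - 1) = 1" if "i < n" for i
    using u(1) M(1) that by (auto simp: h_def e_def ev_def F2vec_def)
  have B: "sum h S \<noteq> 0" if S: "S \<subseteq> {..<n}" "S \<noteq> {}" "card S < 6" for S
  proof -
    have fin: "finite S" using S finite_subset by blast
    have hcS: "\<forall>i\<in>S. h i (t - 1) = 1" using hc S by auto
    have le5: "card S \<le> 5" using S(3) by simp
    show ?thesis
    using fin S(2) le5 proof (cases rule: small_card_cases)
      case (c1 a) then show ?thesis using odd_coord[of S h "t - 1"] fin hcS by simp
    next
      case (c2 a b)
      then have "sum h S = u a + u b" using cancel2[of "u a" e "u b"] by (simp add: h_def add.assoc)
      then show ?thesis using u S c2 injD'[OF u(2), of a b] neq_add by auto
    next
      case (c3 a b c) then show ?thesis using odd_coord[of S h "t - 1"] fin hcS by simp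
    next
      case (c4 a b c d)
      then have "sum h S = u a + u b + u c + u d"
        using cancel4[of "u a" e "u b" "u c" "u d"] by (simp add: h_def add.assoc)
      moreover have "u a + u b + u c + u d \<noteq> 0"
      proof (rule sidon4[OF M(2)])
        show "u a \<in> M" "u b \<in> M" "u c \<in> M" "u d \<in> M" using u(1) S c4 by auto
        show "distinct [u a, u b, u c, u d]" using c4 S injD'[OF u(2)] by auto
      qed
      ultimately show ?thesis by simp
    next
      case (c5 a b c d e) then show ?thesis using odd_coord[of S h "t - 1"] fin hcS by simp
    qed
  qed
  have "good h n t 6" unfolding good_def using A B by blast
  then show ?thesis by blast
qed

lemma G5:
  assumes "n < s_max t" shows "\<exists>h. good h n t 5"
proof -
  obtain M where M: "M \<subseteq> F2vec t" "sidon M" "card M = s_max t"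
    using s_max_attained by blast
  have finM: "finite M" using M(1) finite_F2vec finite_subset by blast
  obtain m0 where m0: "m0 \<in> M" using assms M(3) by fastforce
  have "card {..<n} \<le> card (M - {m0})" using assms M m0 finM by simp
  then obtain u where u: "u ` {..<n} \<subseteq> M - {m0}" "inj_on u {..<n}"
    using card_le_inj[of "{..<n}" "M - {m0}"] finM by auto
  define h where "h i = u i + m0" for i
  have A: "\<forall>i<n. h i \<in> F2vec t"
    using u(1) M(1) m0 by (auto simp: h_def intro!: V.subspace_add[OF F2vec_subspace])
  have uM: "u i \<in> M" "u i \<noteq> m0" if "i < n" for i using u(1) that by auto
  have B: "sum h S \<noteq> 0" if S: "S \<subseteq> {..<n}" "S \<noteq> {}" "card S < 5" for S
  proof -
    have fin: "finite S" using S finite_subset by blast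
    have le5: "card S \<le> 5" using S(3) by simp
    show ?thesis
    using fin S(2) le5 proof (cases rule: small_card_cases)
      case (c1 a) then show ?thesis using uM[of a] S neq_add by (auto simp: h_def)
    next
      case (c2 a b)
      then have "sum h S = u a + u b" using cancel2[of "u a" m0 "u b"] by (simp add: h_def add.assoc)
      then show ?thesis using u S c2 injD'[OF u(2), of a b] neq_add by auto
    next
      case (c3 a b c)
      then have "sum h S = u a + u b + u c + m0"
        using cancel3[of "u a" m0 "u b" "u c"] by (simp add: h_def add.assoc)
      moreover have "u a + u b + u c + m0 \<noteq> 0"
      proof (rule sidon4[OF M(2)])
        show "u a \<in> M" "u b \<in> M" "u c \<in> M" "m0 \<in> M" using uM S c3 m0 by auto
        show "distinct [u a, u b, u c, m0]" using c3 S injD'[OF u(2)] uM by auto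
      qed
      ultimately show ?thesis by simp
    next
      case (c4 a b c d)
      then have "sum h S = u a + u b + u c + u d"
        using cancel4[of "u a" m0 "u b" "u c" "u d"] by (simp add: h_def add.assoc)
      moreover have "u a + u b + u c + u d \<noteq> 0"
      proof (rule sidon4[OF M(2)])
        show "u a \<in> M" "u b \<in> M" "u c \<in> M" "u d \<in> M" using uM S c4 by auto
        show "distinct [u a, u b, u c, u d]" using c4 S injD'[OF u(2)] by auto
      qed
      ultimately show ?thesis by simp
    qed (use S in auto)
  qed
  have "good h n t 5" unfolding good_def using A B by blast
  then show ?thesis by blast
qed

theorem proposition3p4:
  fixes n t :: nat
  assumes "t \<ge> 2" and "n > t"
  shows "(d_max n (n - t) = 3 \<longleftrightarrow> 2 ^ (t - 1) < n \<and> n < 2 ^ t)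
       \<and> (d_max n (n - t) = 4 \<longleftrightarrow> s_max t \<le> n \<and> n \<le> 2 ^ (t - 1))
       \<and> (d_max n (n - t) = 5 \<longleftrightarrow> s_max (t - 1) < n \<and> n < s_max t)
       \<and> (d_max n (n - t) \<ge> 6 \<longleftrightarrow> n \<le> s_max (t - 1))"
proof -
  define D where "D = d_max n (n - t)"
  have tn: "t < n" using assms by simp
  have t1: "1 \<le> t" using assms by simp
  have n0: "0 < n" using assms by simp
  have e3: "3 \<le> D \<longleftrightarrow> n < 2 ^ t"
    unfolding D_def using dmax_good[OF tn, of 3] good3_bound G3 by blast
  have e4: "4 \<le> D \<longleftrightarrow> n \<le> 2 ^ (t - 1)"
    unfolding D_def using dmax_good[OF tn, of 4] good4_bound[OF _ n0 t1] G4[OF _ t1] by blast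
  have e5: "5 \<le> D \<longleftrightarrow> n < s_max t"
    unfolding D_def using dmax_good[OF tn, of 5] good5_bound G5 by blast
  have e6: "6 \<le> D \<longleftrightarrow> n \<le> s_max (t - 1)"
  proof
    assume "6 \<le> D"
    then obtain C where "is_linear_code n (n - t) C" "6 \<le> min_dist C"
      using dmax_ge[OF tn, of 6] unfolding D_def by blast
    then show "n \<le> s_max (t - 1)" using code6_smax tn t1 by blast
  next
    assume "n \<le> s_max (t - 1)"
    then show "6 \<le> D" unfolding D_def using dmax_good[OF tn, of 6] G6[OF _ t1] by blast
  qed
  have "D = 3 \<longleftrightarrow> 3 \<le> D \<and> \<not> 4 \<le> D" by linarith
  moreover have "D = 4 \<longleftrightarrow> 4 \<le> D \<and> \<not> 5 \<le> D" by linarith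
  moreover have "D = 5 \<longleftrightarrow> 5 \<le> D \<and> \<not> 6 \<le> D" by linarith
  ultimately show ?thesis unfolding D_def[symmetric] using e3 e4 e5 e6 by auto
qed

end
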